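(* Let $K$ be a field and $m,n,r$ positive integers. Let $R=K[x_{ij}^k \mid 1\le i\le m,\ 1\le j\le n,\ 1\le k\le r]$ and let $I_{mn}^r$ be the ideal generated by all $2$-minors of the horizontal and of the vertical concatenation of the $m\times n$ matrices $X_k=(x_{ij}^k)$, $k=1,\dots,r$. Let $M=\{1^{m-1},2^{n-1},3^{r-1}\}$ and let $S(M)$ be the set of all words (strings) containing exactly $m-1$ ones, $n-1$ twos and $r-1$ threes. Then the $h$-polynomial of $R/I_{mn}^r$ equals $\sum_{\sigma\in S(M)}t^{\operatorname{des}(\sigma)}$.
   Context: For a word $\sigma=\sigma_1\cdots\sigma_a$, a descent is an index $k$ with $\sigma_k>\sigma_{k+1}$, and $\operatorname{des}(\sigma)$ is the number of descents. The $h$-polynomial of a standard graded algebra $A$ is the numerator of its Hilbert series written in reduced form $h(t)/(1-t)^{\dim A}$. *)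

theory Defs
  imports Main "HOL-Library.Poly_Mapping" "HOL-Computational_Algebra.Formal_Power_Series"
begin

type_synonym var = "nat \<times> nat \<times> nat"
type_synonym 'k mpoly = "(var \<Rightarrow>\<^sub>0 nat) \<Rightarrow>\<^sub>0 'k"

definition Var :: "nat \<Rightarrow> nat \<Rightarrow> nat \<Rightarrow> 'k::field mpoly" where
  "Var i j k = Poly_Mapping.single (Poly_Mapping.single (i, j, k) 1) 1"

definition vars_set :: "nat \<Rightarrow> nat \<Rightarrow> nat \<Rightarrow> var set" where
  "vars_set m n r = {1..m} \<times> {1..n} \<times> {1..r}"

definition mdeg :: "(var \<Rightarrow>\<^sub>0 nat) \<Rightarrow> nat" where
  "mdeg \<alpha> = (\<Sum>v\<in>Poly_Mapping.keys \<alpha>. Poly_Mapping.lookup \<alpha> v)"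

definition polyring :: "nat \<Rightarrow> nat \<Rightarrow> nat \<Rightarrow> 'k::field mpoly set" where
  "polyring m n r = {p. \<forall>\<alpha>\<in>Poly_Mapping.keys p. Poly_Mapping.keys \<alpha> \<subseteq> vars_set m n r}"

definition homog :: "nat \<Rightarrow> nat \<Rightarrow> nat \<Rightarrow> nat \<Rightarrow> 'k::field mpoly set" where
  "homog m n r d = {p \<in> polyring m n r. \<forall>\<alpha>\<in>Poly_Mapping.keys p. mdeg \<alpha> = d}"

text \<open>2-minors of the horizontal concatenation (X_1 ... X_r) (an m x nr matrix; rows i,
  columns (k,j)) and of the vertical concatenation (an mr x n matrix; rows (k,i), columns j).\<close>
definition minors_gens :: "nat \<Rightarrow> nat \<Rightarrow> nat \<Rightarrow> 'k::field mpoly set" where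
  "minors_gens m n r =
     {Var i j k * Var i' j' k' - Var i j' k' * Var i' j k | i i' j j' k k'.
        i \<in> {1..m} \<and> i' \<in> {1..m} \<and> j \<in> {1..n} \<and> j' \<in> {1..n} \<and> k \<in> {1..r} \<and> k' \<in> {1..r}}
   \<union> {Var i j k * Var i' j' k' - Var i j' k * Var i' j k' | i i' j j' k k'.
        i \<in> {1..m} \<and> i' \<in> {1..m} \<and> j \<in> {1..n} \<and> j' \<in> {1..n} \<and> k \<in> {1..r} \<and> k' \<in> {1..r}}"

definition ideal_gen :: "'k::field mpoly set \<Rightarrow> 'k mpoly set \<Rightarrow> 'k mpoly set" where
  "ideal_gen Rs G = {\<Sum>g\<in>G. c g * g | c. \<forall>g\<in>G. c g \<in> Rs}"

definition Imnr :: "nat \<Rightarrow> nat \<Rightarrow> nat \<Rightarrow> 'k::field mpoly set" where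
  "Imnr m n r = ideal_gen (polyring m n r) (minors_gens m n r)"

definition kscale :: "'k::field \<Rightarrow> 'k mpoly \<Rightarrow> 'k mpoly" where
  "kscale c p = Poly_Mapping.single 0 c * p"

definition kdim :: "'k::field mpoly set \<Rightarrow> nat" where
  "kdim V = vector_space.dim kscale V"

definition hilbert_fun :: "nat \<Rightarrow> nat \<Rightarrow> nat \<Rightarrow> 'k::field itself \<Rightarrow> nat \<Rightarrow> nat" where
  "hilbert_fun m n r _ d =
     kdim (homog m n r d :: 'k mpoly set) - kdim (Imnr m n r \<inter> homog m n r d :: 'k mpoly set)"

definition hilbert_series :: "nat \<Rightarrow> nat \<Rightarrow> nat \<Rightarrow> 'k::field itself \<Rightarrow> int fps" where
  "hilbert_series m n r K = Abs_fps (\<lambda>d. int (hilbert_fun m n r K d))"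

definition des :: "nat list \<Rightarrow> nat" where
  "des \<sigma> = card {k. Suc k < length \<sigma> \<and> \<sigma> ! k > \<sigma> ! Suc k}"

definition words_SM :: "nat \<Rightarrow> nat \<Rightarrow> nat \<Rightarrow> nat list set" where
  "words_SM m n r = {\<sigma>. set \<sigma> \<subseteq> {1,2,3} \<and> count_list \<sigma> 1 = m - 1
                          \<and> count_list \<sigma> 2 = n - 1 \<and> count_list \<sigma> 3 = r - 1}"

definition descent_poly :: "nat \<Rightarrow> nat \<Rightarrow> nat \<Rightarrow> int fps" where
  "descent_poly m n r = Abs_fps (\<lambda>d. int (card {\<sigma> \<in> words_SM m n r. des \<sigma> = d}))"

end

theory Submission
  imports Defs "HOL-Library.Multiset"
begin

unbundle fps_syntax

abbreviation "lkp \<equiv> Poly_Mapping.lookup"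
abbreviation "kys \<equiv> Poly_Mapping.keys"
abbreviation "sng \<equiv> Poly_Mapping.single"

lemma kscale_map: "kscale c p = Poly_Mapping.map ((*) c) p"
  by (simp add: kscale_def mult_map_scale_conv_mult)

lemma lookup_kscale[simp]: "lkp (kscale c p) a = c * lkp p a"
  unfolding kscale_map by (simp add: Poly_Mapping.map.rep_eq when_def)

interpretation kvs: vector_space "kscale :: 'k::field \<Rightarrow> 'k mpoly \<Rightarrow> 'k mpoly"
  by unfold_locales (simp_all add: poly_mapping_eq_iff lookup_add algebra_simps fun_eq_iff)

lemma kdim_eq: "kdim = kvs.dim"
  by (simp add: kdim_def fun_eq_iff)

definition msetp :: "('a \<Rightarrow>\<^sub>0 nat) \<Rightarrow> 'a multiset" where
  "msetp \<alpha> = Abs_multiset (lkp \<alpha>)"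
definition pm :: "'a multiset \<Rightarrow> 'a \<Rightarrow>\<^sub>0 nat" where
  "pm M = Abs_poly_mapping (count M)"

lemma count_msetp[simp]: "count (msetp \<alpha>) x = lkp \<alpha> x"
  unfolding msetp_def by (subst count_Abs_multiset) simp_all

lemma fin_count: "finite {x. count M x \<noteq> 0}"
proof -
  have "{x. count M x \<noteq> 0} = set_mset M" by auto
  then show ?thesis by simp
qed

lemma lookup_pm[simp]: "lkp (pm M) x = count M x"
  unfolding pm_def using fin_count[of M] by simp

lemma pm_msetp[simp]: "pm (msetp \<alpha>) = \<alpha>"
  by (rule poly_mapping_eqI) simp

lemma msetp_pm[simp]: "msetp (pm M) = M"
  by (simp add: multiset_eq_iff)

lemma keys_pm[simp]: "kys (pm M) = set_mset M"
  by (auto simp: in_keys_iff)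

lemma pm_plus: "pm (M + N) = pm M + pm N"
  by (rule poly_mapping_eqI) (simp add: lookup_add)

lemma msetp_plus: "msetp (\<alpha> + \<beta>) = msetp \<alpha> + msetp \<beta>"
  by (simp add: multiset_eq_iff lookup_add)

lemma pm_single: "pm {#v#} = sng v 1"
  by (rule poly_mapping_eqI) (simp add: lookup_single when_def)

lemma msetp_single[simp]: "msetp (sng v 1) = {#v#}"
  by (metis msetp_pm pm_single)

lemma inj_pm: "inj pm"
  by (metis injI msetp_pm)

lemma mdeg_pm: "mdeg (pm M) = size M"
  by (simp add: mdeg_def size_multiset_overloaded_eq)

definition mnm :: "(var \<Rightarrow>\<^sub>0 nat) \<Rightarrow> 'k::field mpoly" where
  "mnm \<alpha> = sng \<alpha> 1"

lemma mono_mult: "mnm \<alpha> * mnm \<beta> = mnm (\<alpha> + \<beta>)"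
  by (simp add: mnm_def mult_single)

lemma Var_mono: "Var i j k = mnm (pm {#(i,j,k)#})"
  by (simp add: Var_def mnm_def pm_single)

lemma kscale_mono: "kscale c (mnm \<alpha>) = sng \<alpha> c"
  by (simp add: kscale_def mnm_def mult_single)

lemma lookup_mono: "lkp (mnm \<alpha> :: 'k::field mpoly) \<beta> = (if \<alpha> = \<beta> then 1 else 0)"
  by (simp add: mnm_def lookup_single when_def)

lemma inj_mono: "inj (mnm :: _ \<Rightarrow> 'k::field mpoly)"
  by (rule injI) (metis lookup_mono one_neq_zero)

lemma poly_expand: "p = (\<Sum>\<alpha>\<in>kys p. sng \<alpha> (lkp p \<alpha>))"
  by (rule poly_mapping_eqI) (simp add: lookup_sum lookup_single when_def in_keys_iff)

lemma poly_expand_mono: "p = (\<Sum>\<alpha>\<in>kys p. kscale (lkp p \<alpha>) (mnm \<alpha>))"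
  by (subst poly_expand) (simp add: kscale_mono)


lemma keys_plus_nat: "kys (\<alpha> + \<beta> :: 'a \<Rightarrow>\<^sub>0 nat) = kys \<alpha> \<union> kys \<beta>"
  by (auto simp: in_keys_iff lookup_add)

lemma polyring_add: "p \<in> polyring m n r \<Longrightarrow> q \<in> polyring m n r \<Longrightarrow> p + q \<in> polyring m n r"
  unfolding polyring_def using keys_add[of p q] by blast

lemma polyring_mult: "p \<in> polyring m n r \<Longrightarrow> q \<in> polyring m n r \<Longrightarrow> p * q \<in> polyring m n r"
  unfolding polyring_def using keys_mult[of p q] by (force simp: keys_plus_nat)

lemma keys_kscale: "kys (kscale c p) \<subseteq> kys p"
  by (auto simp: in_keys_iff)

lemma polyring_kscale: "p \<in> polyring m n r \<Longrightarrow> kscale c p \<in> polyring m n r"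
  unfolding polyring_def using keys_kscale by blast

lemma polyring_one: "1 \<in> polyring m n r"
  by (simp add: polyring_def)

lemma polyring_zero: "0 \<in> polyring m n r"
  by (simp add: polyring_def)

lemma polyring_mono: "kys \<alpha> \<subseteq> vars_set m n r \<Longrightarrow> mnm \<alpha> \<in> polyring m n r"
  by (simp add: polyring_def mnm_def)

lemma subspace_homog: "kvs.subspace (homog m n r d)"
proof (rule kvs.subspaceI)
  show "0 \<in> homog m n r d" by (simp add: homog_def polyring_zero)
next
  fix x y :: "'k::field mpoly" assume "x \<in> homog m n r d" "y \<in> homog m n r d"
  then show "x + y \<in> homog m n r d"
    unfolding homog_def using keys_add[of x y] polyring_add by blast
next
  fix c and x :: "'k::field mpoly" assume "x \<in> homog m n r d"
  then show "kscale c x \<in> homog m n r d"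
    unfolding homog_def using keys_kscale polyring_kscale by blast
qed

lemma polyring_uminus: "p \<in> polyring m n r \<Longrightarrow> - p \<in> polyring m n r"
proof -
  have "kys (- p) = kys p" by (auto simp: in_keys_iff)
  then show "p \<in> polyring m n r \<Longrightarrow> - p \<in> polyring m n r" by (simp add: polyring_def)
qed

lemma polyring_diff: "p \<in> polyring m n r \<Longrightarrow> q \<in> polyring m n r \<Longrightarrow> p - q \<in> polyring m n r"
  using polyring_add[of p m n r "-q"] polyring_uminus[of q] by simp

lemma polyring_Var: "i \<in> {1..m} \<Longrightarrow> j \<in> {1..n} \<Longrightarrow> k \<in> {1..r} \<Longrightarrow> Var i j k \<in> polyring m n r"
  by (simp add: Var_mono polyring_mono vars_set_def)

lemma finite_minors: "finite (minors_gens m n r :: 'k::field mpoly set)"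
proof -
  let ?S = "{1..m} \<times> {1..m} \<times> {1..n} \<times> {1..n} \<times> {1..r} \<times> {1..r}"
  define f1 where "f1 = (\<lambda>(i,i',j,j',k,k'). Var i j k * Var i' j' k' - Var i j' k' * Var i' j k :: 'k mpoly)"
  define f2 where "f2 = (\<lambda>(i,i',j,j',k,k'). Var i j k * Var i' j' k' - Var i j' k * Var i' j k' :: 'k mpoly)"
  have "minors_gens m n r \<subseteq> f1 ` ?S \<union> f2 ` ?S"
  proof
    fix g assume "g \<in> (minors_gens m n r :: 'k mpoly set)"
    then show "g \<in> f1 ` ?S \<union> f2 ` ?S"
      unfolding minors_gens_def
    proof (elim UnE CollectE exE conjE)
      fix i i' j j' k k' assume "g = Var i j k * Var i' j' k' - Var i j' k' * Var i' j k"
        and "i \<in> {1..m}" "i' \<in> {1..m}" "j \<in> {1..n}" "j' \<in> {1..n}" "k \<in> {1..r}" "k' \<in> {1..r}"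
      then have "g = f1 (i,i',j,j',k,k')" "(i,i',j,j',k,k') \<in> ?S" by (simp_all add: f1_def)
      then show ?thesis by blast
    next
      fix i i' j j' k k' assume "g = Var i j k * Var i' j' k' - Var i j' k * Var i' j k'"
        and "i \<in> {1..m}" "i' \<in> {1..m}" "j \<in> {1..n}" "j' \<in> {1..n}" "k \<in> {1..r}" "k' \<in> {1..r}"
      then have "g = f2 (i,i',j,j',k,k')" "(i,i',j,j',k,k') \<in> ?S" by (simp_all add: f2_def)
      then show ?thesis by blast
    qed
  qed
  then show ?thesis by (rule finite_subset) simp
qed

lemma minors_polyring: "g \<in> minors_gens m n r \<Longrightarrow> g \<in> polyring m n r"
  unfolding minors_gens_def
  by (elim UnE CollectE exE conjE) (simp_all add: polyring_diff polyring_mult polyring_Var)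

lemma Imnr_mem: "x \<in> Imnr m n r \<longleftrightarrow>
   (\<exists>c. (\<forall>g\<in>minors_gens m n r. c g \<in> polyring m n r) \<and> x = (\<Sum>g\<in>minors_gens m n r. c g * g))"
  unfolding Imnr_def ideal_gen_def by blast

lemma I_add: assumes "x \<in> Imnr m n r" "y \<in> Imnr m n r" shows "x + y \<in> (Imnr m n r :: 'k::field mpoly set)"
proof -
  from assms obtain c1 c2 where c1: "\<forall>g\<in>minors_gens m n r. c1 g \<in> polyring m n r" "x = (\<Sum>g\<in>minors_gens m n r. c1 g * g)"
    and c2: "\<forall>g\<in>minors_gens m n r. c2 g \<in> polyring m n r" "y = (\<Sum>g\<in>minors_gens m n r. c2 g * g)"
    unfolding Imnr_mem by blast
  have "x + y = (\<Sum>g\<in>minors_gens m n r. (c1 g + c2 g) * g)"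
    by (simp add: c1 c2 distrib_right sum.distrib)
  then show ?thesis unfolding Imnr_mem using c1 c2 polyring_add
    by (intro exI[of _ "\<lambda>g. c1 g + c2 g"]) (auto intro: polyring_add)
qed

lemma I_mult: assumes "x \<in> Imnr m n r" "p \<in> polyring m n r" shows "p * x \<in> (Imnr m n r :: 'k::field mpoly set)"
proof -
  from assms obtain c1 where c1: "\<forall>g\<in>minors_gens m n r. c1 g \<in> polyring m n r" "x = (\<Sum>g\<in>minors_gens m n r. c1 g * g)"
    unfolding Imnr_mem by blast
  have "p * x = (\<Sum>g\<in>minors_gens m n r. (p * c1 g) * g)"
    by (simp add: c1 sum_distrib_left mult.assoc)
  then show ?thesis unfolding Imnr_mem using c1 polyring_mult assms(2)
    by (intro exI[of _ "\<lambda>g. p * c1 g"]) (auto intro: polyring_mult)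
qed

lemma I_kscale: assumes "x \<in> Imnr m n r" shows "kscale c x \<in> (Imnr m n r :: 'k::field mpoly set)"
  unfolding kscale_def by (rule I_mult[OF assms]) (simp add: polyring_def)

lemma I_zero: "0 \<in> (Imnr m n r :: 'k::field mpoly set)"
  unfolding Imnr_mem by (rule exI[of _ "\<lambda>_. 0"]) (simp add: polyring_zero)

lemma subspace_I: "kvs.subspace (Imnr m n r :: 'k::field mpoly set)"
  by (rule kvs.subspaceI) (auto intro: I_zero I_add I_kscale)

lemma I_uminus: "x \<in> Imnr m n r \<Longrightarrow> - x \<in> (Imnr m n r :: 'k::field mpoly set)"
  using kvs.subspace_neg[OF subspace_I] by blast

lemma I_diff: "x \<in> Imnr m n r \<Longrightarrow> y \<in> Imnr m n r \<Longrightarrow> x - y \<in> (Imnr m n r :: 'k::field mpoly set)"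
  using kvs.subspace_diff[OF subspace_I] by blast

lemma I_gen: assumes "g0 \<in> minors_gens m n r" shows "g0 \<in> (Imnr m n r :: 'k::field mpoly set)"
proof -
  let ?c = "\<lambda>g. if g = g0 then 1 else (0::'k mpoly)"
  have "(\<Sum>g\<in>minors_gens m n r. ?c g * g) = (\<Sum>g\<in>minors_gens m n r. if g = g0 then g else 0)"
    by (rule sum.cong) auto
  also have "\<dots> = g0" using assms by (simp add: sum.delta[OF finite_minors])
  finally show ?thesis unfolding Imnr_mem using polyring_one polyring_zero
    by (intro exI[of _ ?c]) auto
qed

definition mm :: "var multiset \<Rightarrow> 'k::field mpoly" where
  "mm M = mnm (pm M)"

lemma mm_plus: "mm (M + N) = mm M * mm N"
  by (simp add: mm_def pm_plus mono_mult)

lemma mm_single: "mm {#(i,j,k)#} = Var i j k"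
  by (simp add: mm_def Var_mono)

lemma mm_add_mset: "mm (add_mset v M) = mm {#v#} * mm M"
  by (metis add_mset_add_single mm_plus mult.commute)

lemma mm_polyring: "set_mset M \<subseteq> vars_set m n r \<Longrightarrow> mm M \<in> polyring m n r"
  by (simp add: mm_def polyring_mono)

definition rel :: "nat \<Rightarrow> nat \<Rightarrow> nat \<Rightarrow> 'k::field itself \<Rightarrow> var multiset \<Rightarrow> var multiset \<Rightarrow> bool" where
  "rel m n r K M N \<longleftrightarrow> (mm M - mm N :: 'k mpoly) \<in> Imnr m n r"

lemma rel_refl: "rel m n r K M M"
  by (simp add: rel_def I_zero)

lemma rel_trans: "rel m n r K A B \<Longrightarrow> rel m n r K B C \<Longrightarrow> rel m n r K A C"
  unfolding rel_def by (drule (1) I_add) simp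

lemma rel_sym: "rel m n r K A B \<Longrightarrow> rel m n r K B A"
  unfolding rel_def by (drule I_uminus) simp

definition cls :: "var multiset \<Rightarrow> nat multiset \<times> nat multiset \<times> nat multiset" where
  "cls M = (image_mset fst M, image_mset (\<lambda>v. fst (snd v)) M, image_mset (\<lambda>v. snd (snd v)) M)"

lemma vs_mem: "(i,j,k) \<in> vars_set m n r \<longleftrightarrow> i \<in> {1..m} \<and> j \<in> {1..n} \<and> k \<in> {1..r}"
  by (simp add: vars_set_def)

lemma mm_two: "mm (R + {#a,b#}) = mm R * mm {#a#} * mm {#b#}"
proof -
  have "R + {#a,b#} = (R + {#a#}) + {#b#}" by simp
  then show ?thesis by (simp only: mm_plus)
qed

lemma move1:
  fixes K :: "'k::field itself"
  assumes "set_mset R \<subseteq> vars_set m n r" "(i,j,k) \<in> vars_set m n r" "(i',j',k') \<in> vars_set m n r"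
  shows "rel m n r K (R + {#(i,j,k),(i',j',k')#}) (R + {#(i,j',k'),(i',j,k)#})"
proof -
  let ?g = "Var i j k * Var i' j' k' - Var i j' k' * Var i' j k :: 'k mpoly"
  have g: "?g \<in> minors_gens m n r" using assms(2,3) unfolding minors_gens_def vs_mem
    by (intro UnI1 UnI2 CollectI exI conjI refl) auto
  have "mm (R + {#(i,j,k),(i',j',k')#}) - mm (R + {#(i,j',k'),(i',j,k)#}) = mm R * ?g"
    by (simp only: mm_two mm_single) (simp add: right_diff_distrib mult.assoc)
  moreover have "mm R * ?g \<in> Imnr m n r"
    by (rule I_mult[OF I_gen[OF g] mm_polyring[OF assms(1)]])
  ultimately show ?thesis by (simp add: rel_def)
qed

lemma move2:
  fixes K :: "'k::field itself"
  assumes "set_mset R \<subseteq> vars_set m n r" "(i,j,k) \<in> vars_set m n r" "(i',j',k') \<in> vars_set m n r"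
  shows "rel m n r K (R + {#(i,j,k),(i',j',k')#}) (R + {#(i,j',k),(i',j,k')#})"
proof -
  let ?g = "Var i j k * Var i' j' k' - Var i j' k * Var i' j k' :: 'k mpoly"
  have g: "?g \<in> minors_gens m n r" using assms(2,3) unfolding minors_gens_def vs_mem
    by (intro UnI1 UnI2 CollectI exI conjI refl) auto
  have "mm (R + {#(i,j,k),(i',j',k')#}) - mm (R + {#(i,j',k),(i',j,k')#}) = mm R * ?g"
    by (simp only: mm_two mm_single) (simp add: right_diff_distrib mult.assoc)
  moreover have "mm R * ?g \<in> Imnr m n r"
    by (rule I_mult[OF I_gen[OF g] mm_polyring[OF assms(1)]])
  ultimately show ?thesis by (simp add: rel_def)
qed

lemma split2: assumes "a \<in># M" "b \<in># M" "a \<noteq> b" shows "M = (M - {#a, b#}) + {#a, b#}"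
proof -
  have "{#a, b#} \<subseteq># M" using assms by (auto simp: subseteq_mset_def)
  then show ?thesis by (metis subset_mset.diff_add)
qed

lemma normalize:
  fixes K :: "'k::field itself"
  assumes V: "set_mset M \<subseteq> vars_set m n r"
    and i0: "i0 \<in># image_mset fst M" and j0: "j0 \<in># image_mset (\<lambda>v. fst (snd v)) M"
    and k0: "k0 \<in># image_mset (\<lambda>v. snd (snd v)) M"
  shows "\<exists>M'. rel m n r K M M' \<and> cls M' = cls M \<and> set_mset M' \<subseteq> vars_set m n r \<and> (i0,j0,k0) \<in># M'"
proof -
  obtain j1 k1 where a: "(i0,j1,k1) \<in># M" using i0 by auto
  obtain i2 k2 where b: "(i2,j0,k2) \<in># M" using j0 by auto
  have step1: "\<exists>M1. rel m n r K M M1 \<and> cls M1 = cls M \<and> set_mset M1 \<subseteq> vars_set m n r \<and> (i0,j0,k1) \<in># M1"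
  proof (cases "j1 = j0")
    case True then show ?thesis using a V by (intro exI[of _ M]) (auto simp: rel_refl)
  next
    case False
    define R where "R = M - {#(i0,j1,k1),(i2,j0,k2)#}"
    have M: "M = R + {#(i0,j1,k1),(i2,j0,k2)#}" unfolding R_def using split2[OF a b] False by auto
    have RV: "set_mset R \<subseteq> vars_set m n r" using V unfolding R_def by (meson in_diffD subset_iff)
    have av: "(i0,j1,k1) \<in> vars_set m n r" "(i2,j0,k2) \<in> vars_set m n r" using a b V by auto
    let ?M1 = "R + {#(i0,j0,k1),(i2,j1,k2)#}"
    have "rel m n r K M ?M1" using move2[OF RV av, of K] M by simp
    moreover have "cls ?M1 = cls M" by (simp add: M cls_def add_mset_commute)
    moreover have "set_mset ?M1 \<subseteq> vars_set m n r" using RV av by (auto simp: vs_mem)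
    ultimately show ?thesis by (intro exI[of _ ?M1]) auto
  qed
  then obtain M1 where M1: "rel m n r K M M1" "cls M1 = cls M" "set_mset M1 \<subseteq> vars_set m n r" "(i0,j0,k1) \<in># M1"
    by blast
  have "k0 \<in># image_mset (\<lambda>v. snd (snd v)) M1" using k0 M1(2) by (simp add: cls_def)
  then obtain i3 j3 where c: "(i3,j3,k0) \<in># M1" by auto
  show ?thesis
  proof (cases "k1 = k0")
    case True then show ?thesis using M1 by blast
  next
    case False
    define R where "R = M1 - {#(i0,j0,k1),(i3,j3,k0)#}"
    have M: "M1 = R + {#(i0,j0,k1),(i3,j3,k0)#}" unfolding R_def using split2[OF M1(4) c] False by auto
    have RV: "set_mset R \<subseteq> vars_set m n r" using M1(3) unfolding R_def by (meson in_diffD subset_iff)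
    have av: "(i0,j0,k1) \<in> vars_set m n r" "(i3,j3,k0) \<in> vars_set m n r" using M1(3,4) c by auto
    let ?M2 = "R + {#(i0,j3,k0),(i3,j0,k1)#}"
    let ?M3 = "R + {#(i0,j0,k0),(i3,j3,k1)#}"
    have r2: "rel m n r K M1 ?M2" using move1[OF RV av, of K] M by simp
    have av2: "(i0,j3,k0) \<in> vars_set m n r" "(i3,j0,k1) \<in> vars_set m n r" using av by (auto simp: vs_mem)
    have r3: "rel m n r K ?M2 ?M3" using move2[OF RV av2, of K] by simp
    have "rel m n r K M ?M3" using rel_trans[OF M1(1) rel_trans[OF r2 r3]] .
    moreover have "cls ?M3 = cls M" using M1(2) by (simp add: M cls_def add_mset_commute)
    moreover have "set_mset ?M3 \<subseteq> vars_set m n r" using RV av by (auto simp: vs_mem)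
    ultimately show ?thesis by (intro exI[of _ ?M3]) auto
  qed
qed

lemma cls_size: "cls M = cls N \<Longrightarrow> size M = size N"
  unfolding cls_def by (metis prod.inject size_image_mset)

lemma connect:
  fixes K :: "'k::field itself"
  shows "size M = d \<Longrightarrow> set_mset M \<subseteq> vars_set m n r \<Longrightarrow> set_mset N \<subseteq> vars_set m n r
    \<Longrightarrow> cls M = cls N \<Longrightarrow> rel m n r K M N"
proof (induction d arbitrary: M N)
  case 0
  then have "M = {#}" "N = {#}" using cls_size[OF 0(4)] by auto
  then show ?case by (simp add: rel_refl)
next
  case (Suc d)
  have "size N = Suc d" using cls_size[OF Suc(5)] Suc(2) by simp
  then obtain v where v: "v \<in># N" using size_eq_Suc_imp_elem by blast
  obtain i0 j0 k0 where v3: "v = (i0,j0,k0)" by (cases v) auto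
  have cl: "image_mset fst M = image_mset fst N" "image_mset (\<lambda>v. fst (snd v)) M = image_mset (\<lambda>v. fst (snd v)) N"
    "image_mset (\<lambda>v. snd (snd v)) M = image_mset (\<lambda>v. snd (snd v)) N" using Suc(5) by (simp_all add: cls_def)
  have "i0 \<in># image_mset fst M" "j0 \<in># image_mset (\<lambda>v. fst (snd v)) M" "k0 \<in># image_mset (\<lambda>v. snd (snd v)) M"
    unfolding cl using v v3 by force+
  from normalize[OF Suc(3) this, of K] obtain M' where
    M': "rel m n r K M M'" "cls M' = cls M" "set_mset M' \<subseteq> vars_set m n r" "v \<in># M'"
    using v3 by blast
  define M'' where "M'' = M' - {#v#}"
  define N'' where "N'' = N - {#v#}"
  have e1: "M' = add_mset v M''" unfolding M''_def using M'(4) by (simp add: insert_DiffM)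
  have e2: "N = add_mset v N''" unfolding N''_def using v by (simp add: insert_DiffM)
  have "cls (add_mset v M'') = cls (add_mset v N'')" using M'(2) Suc(5) e1 e2 by simp
  then have "cls M'' = cls N''" by (simp add: cls_def)
  moreover have "size M'' = d" using cls_size[OF M'(2)] Suc(2) e1 by simp
  moreover have "set_mset M'' \<subseteq> vars_set m n r" "set_mset N'' \<subseteq> vars_set m n r"
    using M'(3) Suc(4) e1 e2 by auto
  ultimately have "rel m n r K M'' N''" using Suc.IH by blast
  then have "mm {#v#} * (mm M'' - mm N'') \<in> (Imnr m n r :: 'k mpoly set)"
    unfolding rel_def by (rule I_mult) (rule mm_polyring, use v Suc(4) in auto)
  then have "rel m n r K M' N"
    unfolding rel_def e1 e2 mm_add_mset[of v M''] mm_add_mset[of v N''] by (simp add: right_diff_distrib)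
  then show ?case using M'(1) rel_trans by blast
qed

definition Lw :: "((var \<Rightarrow>\<^sub>0 nat) \<Rightarrow> 'k::field) \<Rightarrow> 'k mpoly \<Rightarrow> 'k" where
  "Lw w p = (\<Sum>\<alpha>\<in>kys p. lkp p \<alpha> * w \<alpha>)"

lemma Lw_superset: "finite S \<Longrightarrow> kys p \<subseteq> S \<Longrightarrow> Lw w p = (\<Sum>\<alpha>\<in>S. lkp p \<alpha> * w \<alpha>)"
  unfolding Lw_def by (rule sum.mono_neutral_left) (auto simp: in_keys_iff)

lemma Lw_add: "Lw w (p + q) = Lw w p + Lw w q"
proof -
  let ?S = "kys p \<union> kys q"
  have "Lw w (p + q) = (\<Sum>\<alpha>\<in>?S. lkp (p + q) \<alpha> * w \<alpha>)" by (rule Lw_superset) (auto simp: keys_add[of p q, simplified])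
  also have "\<dots> = (\<Sum>\<alpha>\<in>?S. lkp p \<alpha> * w \<alpha>) + (\<Sum>\<alpha>\<in>?S. lkp q \<alpha> * w \<alpha>)"
    by (simp add: lookup_add distrib_right sum.distrib)
  also have "\<dots> = Lw w p + Lw w q"
    using Lw_superset[of ?S p w] Lw_superset[of ?S q w] by simp
  finally show ?thesis .
qed

lemma Lw_zero[simp]: "Lw w 0 = 0"
  by (simp add: Lw_def)

lemma Lw_uminus: "Lw w (- p) = - Lw w p"
proof -
  have "Lw w (- p) + Lw w p = 0" by (simp flip: Lw_add)
  then show ?thesis by (simp add: eq_neg_iff_add_eq_0)
qed

lemma Lw_diff: "Lw w (p - q) = Lw w p - Lw w q"
  using Lw_add[of w p "- q"] Lw_uminus[of w q] by simp

lemma Lw_sum: "Lw w (sum f A) = (\<Sum>x\<in>A. Lw w (f x))"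
  by (induction A rule: infinite_finite_induct) (simp_all add: Lw_add)

lemma Lw_single: "Lw w (sng \<alpha> c) = c * w \<alpha>"
  by (simp add: Lw_def)

lemma Lw_mult_gen:
  assumes "\<And>\<beta>. w (\<beta> + a) = w (\<beta> + b)"
  shows "Lw w (p * (mnm a - mnm b)) = 0"
proof -
  have "p * (mnm a - mnm b) = (\<Sum>\<beta>\<in>kys p. sng \<beta> (lkp p \<beta>) * (mnm a - mnm b))"
    by (subst poly_expand[of p]) (simp add: sum_distrib_right)
  also have "\<dots> = (\<Sum>\<beta>\<in>kys p. sng (\<beta> + a) (lkp p \<beta>) - sng (\<beta> + b) (lkp p \<beta>))"
    by (simp add: mnm_def right_diff_distrib mult_single)
  finally show ?thesis by (simp add: Lw_sum Lw_diff Lw_single assms)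
qed

definition wc :: "nat multiset \<times> nat multiset \<times> nat multiset \<Rightarrow> (var \<Rightarrow>\<^sub>0 nat) \<Rightarrow> 'k::field" where
  "wc c \<alpha> = (if cls (msetp \<alpha>) = c then 1 else 0)"

lemma cls_plus_cong: "cls A = cls B \<Longrightarrow> cls (C + A) = cls (C + B)"
  by (simp add: cls_def)

lemma pm_empty: "pm {#} = 0"
  by (rule poly_mapping_eqI) simp

lemma sng_one: "sng 0 1 = 1"
  by (rule poly_mapping_eqI) (simp add: lookup_single lookup_one)

lemma mm_empty: "mm {#} = 1"
  by (simp add: mm_def mnm_def pm_empty sng_one)

lemma gen_form: assumes "g \<in> minors_gens m n r"
  shows "\<exists>X Y. g = (mm X - mm Y :: 'k::field mpoly) \<and> cls X = cls Y"
proof -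
  have two: "mm {#a, b#} = (mm {#a#} * mm {#b#} :: 'k mpoly)" for a b
    using mm_two[of "{#}" a b] by (simp add: mm_empty)
  from assms show ?thesis unfolding minors_gens_def
  proof (elim UnE CollectE exE conjE)
    fix i i' j j' k k' assume "g = Var i j k * Var i' j' k' - Var i j' k' * Var i' j k"
    then have "g = mm {#(i,j,k),(i',j',k')#} - mm {#(i,j',k'),(i',j,k)#}" by (simp add: two mm_single)
    moreover have "cls {#(i,j,k),(i',j',k')#} = cls {#(i,j',k'),(i',j,k)#}" by (simp add: cls_def add_mset_commute)
    ultimately show ?thesis by blast
  next
    fix i i' j j' k k' assume "g = Var i j k * Var i' j' k' - Var i j' k * Var i' j k'"
    then have "g = mm {#(i,j,k),(i',j',k')#} - mm {#(i,j',k),(i',j,k')#}" by (simp add: two mm_single)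
    moreover have "cls {#(i,j,k),(i',j',k')#} = cls {#(i,j',k),(i',j,k')#}" by (simp add: cls_def add_mset_commute)
    ultimately show ?thesis by blast
  qed
qed

lemma Lw_I: assumes "x \<in> Imnr m n r" shows "Lw (wc c) (x :: 'k::field mpoly) = 0"
proof -
  from assms obtain cf where x: "x = (\<Sum>g\<in>minors_gens m n r. cf g * g)"
    unfolding Imnr_mem by blast
  have "Lw (wc c) (cf g * g) = 0" if gG: "g \<in> minors_gens m n r" for g
  proof -
    obtain X Y where g: "g = (mm X - mm Y :: 'k mpoly)" "cls X = cls Y" using gen_form[OF gG] by blast
    have "wc c (\<beta> + pm X) = (wc c (\<beta> + pm Y) :: 'k)" for \<beta>
      using cls_plus_cong[OF g(2), of "msetp \<beta>"] by (simp add: wc_def msetp_plus)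
    then show ?thesis unfolding g(1) mm_def by (rule Lw_mult_gen)
  qed
  then show ?thesis unfolding x Lw_sum by simp
qed

definition Md :: "nat \<Rightarrow> nat \<Rightarrow> nat \<Rightarrow> nat \<Rightarrow> (var \<Rightarrow>\<^sub>0 nat) set" where
  "Md m n r d = {\<alpha>. kys \<alpha> \<subseteq> vars_set m n r \<and> mdeg \<alpha> = d}"

lemma set_mset_msetp: "set_mset (msetp \<alpha>) = kys \<alpha>"
proof -
  have "x \<in># msetp \<alpha> \<longleftrightarrow> x \<in> kys \<alpha>" for x
    using count_eq_zero_iff[of "msetp \<alpha>" x] by (auto simp: in_keys_iff)
  then show ?thesis by blast
qed

lemma size_msetp: "size (msetp \<alpha>) = mdeg \<alpha>"
  using mdeg_pm[of "msetp \<alpha>"] by simp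

lemma Md_eq: "Md m n r d = pm ` multisets_of_size (vars_set m n r) d"
proof
  show "Md m n r d \<subseteq> pm ` multisets_of_size (vars_set m n r) d"
  proof
    fix \<alpha> assume "\<alpha> \<in> Md m n r d"
    then have "msetp \<alpha> \<in> multisets_of_size (vars_set m n r) d"
      by (simp add: Md_def multisets_of_size_def set_mset_msetp size_msetp)
    then show "\<alpha> \<in> pm ` multisets_of_size (vars_set m n r) d"
      by (metis image_eqI pm_msetp)
  qed
  show "pm ` multisets_of_size (vars_set m n r) d \<subseteq> Md m n r d"
    by (auto simp: Md_def multisets_of_size_def mdeg_pm)
qed

lemma finite_vars: "finite (vars_set m n r)"
  by (simp add: vars_set_def)

lemma finite_Md: "finite (Md m n r d)"
  unfolding Md_eq by (intro finite_imageI finite_multisets_of_size finite_vars)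

lemma homog_keys: "p \<in> homog m n r d \<Longrightarrow> kys p \<subseteq> Md m n r d"
  by (auto simp: homog_def polyring_def Md_def)

lemma mono_homog: "\<alpha> \<in> Md m n r d \<Longrightarrow> (mnm \<alpha> :: 'k::field mpoly) \<in> homog m n r d"
  by (simp add: homog_def polyring_def Md_def mnm_def)

lemma lookup_sum_kscale:
  "lkp (\<Sum>x\<in>A. kscale (u x) (v x)) \<gamma> = (\<Sum>x\<in>A. u x * lkp (v x) \<gamma>)"
  by (simp add: lookup_sum)

lemma span_homog: "kvs.span (mnm ` Md m n r d) = (homog m n r d :: 'k::field mpoly set)"
proof (rule kvs.span_subspace)
  show "mnm ` Md m n r d \<subseteq> (homog m n r d :: 'k mpoly set)" using mono_homog by blast
  show "homog m n r d \<subseteq> kvs.span (mnm ` Md m n r d :: 'k mpoly set)"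
  proof
    fix p :: "'k mpoly" assume p: "p \<in> homog m n r d"
    have "p = (\<Sum>\<alpha>\<in>kys p. kscale (lkp p \<alpha>) (mnm \<alpha>))" by (rule poly_expand_mono)
    also have "\<dots> \<in> kvs.span (mnm ` Md m n r d)"
      using homog_keys[OF p] by (intro kvs.span_sum kvs.span_scale kvs.span_base) auto
    finally show "p \<in> kvs.span (mnm ` Md m n r d)" .
  qed
  show "kvs.subspace (homog m n r d :: 'k mpoly set)" by (rule subspace_homog)
qed

lemma indep_monos: "kvs.independent (mnm ` A :: 'k::field mpoly set)" if "finite A"
proof (rule kvs.independent_if_scalars_zero)
  show "finite (mnm ` A :: 'k mpoly set)" using that by simp
  fix f :: "'k mpoly \<Rightarrow> 'k" and x :: "'k mpoly"
  assume s: "(\<Sum>x\<in>mnm ` A. kscale (f x) x) = 0" and x: "x \<in> mnm ` A"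
  then obtain \<alpha> where a: "\<alpha> \<in> A" "x = mnm \<alpha>" by blast
  have "0 = lkp (\<Sum>x\<in>mnm ` A. kscale (f x) x) \<alpha>" using s by simp
  also have "\<dots> = (\<Sum>\<beta>\<in>A. f (mnm \<beta>) * lkp (mnm \<beta> :: 'k mpoly) \<alpha>)"
    by (simp add: lookup_sum sum.reindex[OF inj_on_subset[OF inj_mono subset_UNIV]])
  also have "\<dots> = (\<Sum>\<beta>\<in>A. if \<beta> = \<alpha> then f (mnm \<beta>) else 0)"
    by (rule sum.cong) (auto simp: lookup_mono)
  also have "\<dots> = f (mnm \<alpha>)" using a(1) that by simp
  finally show "f x = 0" using a by simp
qed

lemma dim_homog: "kvs.dim (homog m n r d :: 'k::field mpoly set) = card (Md m n r d)"
proof -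
  have "kvs.dim (homog m n r d :: 'k mpoly set) = card (mnm ` Md m n r d :: 'k mpoly set)"
    by (rule kvs.dim_eq_card) (simp_all add: span_homog indep_monos finite_Md
        kvs.span_eq_iff[THEN iffD2, OF subspace_homog])
  also have "\<dots> = card (Md m n r d)"
    by (rule card_image) (rule inj_on_subset[OF inj_mono subset_UNIV])
  finally show ?thesis .
qed

definition clsa :: "(var \<Rightarrow>\<^sub>0 nat) \<Rightarrow> nat multiset \<times> nat multiset \<times> nat multiset" where
  "clsa \<alpha> = cls (msetp \<alpha>)"

definition rep :: "nat \<Rightarrow> nat \<Rightarrow> nat \<Rightarrow> nat \<Rightarrow> (var \<Rightarrow>\<^sub>0 nat) \<Rightarrow> (var \<Rightarrow>\<^sub>0 nat)" where
  "rep m n r d \<alpha> = (SOME \<beta>. \<beta> \<in> Md m n r d \<and> clsa \<beta> = clsa \<alpha>)"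

definition RB :: "nat \<Rightarrow> nat \<Rightarrow> nat \<Rightarrow> nat \<Rightarrow> (var \<Rightarrow>\<^sub>0 nat) set" where
  "RB m n r d = rep m n r d ` Md m n r d"

lemma rep_props: assumes "\<alpha> \<in> Md m n r d"
  shows "rep m n r d \<alpha> \<in> Md m n r d" "clsa (rep m n r d \<alpha>) = clsa \<alpha>"
proof -
  have "\<exists>\<beta>. \<beta> \<in> Md m n r d \<and> clsa \<beta> = clsa \<alpha>" using assms by blast
  then have "rep m n r d \<alpha> \<in> Md m n r d \<and> clsa (rep m n r d \<alpha>) = clsa \<alpha>"
    unfolding rep_def by (rule someI_ex)
  then show "rep m n r d \<alpha> \<in> Md m n r d" "clsa (rep m n r d \<alpha>) = clsa \<alpha>" by auto
qed

lemma rep_cong: "clsa \<alpha> = clsa \<beta> \<Longrightarrow> rep m n r d \<alpha> = rep m n r d \<beta>"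
  unfolding rep_def by simp

lemma RB_sub: "RB m n r d \<subseteq> Md m n r d"
  unfolding RB_def using rep_props(1) by blast

lemma rep_RB: assumes "\<beta> \<in> RB m n r d" shows "rep m n r d \<beta> = \<beta>"
proof -
  from assms obtain \<alpha> where a: "\<alpha> \<in> Md m n r d" "\<beta> = rep m n r d \<alpha>" unfolding RB_def by blast
  have "rep m n r d (rep m n r d \<alpha>) = rep m n r d \<alpha>" by (rule rep_cong) (rule rep_props(2)[OF a(1)])
  then show ?thesis using a(2) by simp
qed

lemma rep_in_RB: "\<alpha> \<in> Md m n r d \<Longrightarrow> rep m n r d \<alpha> \<in> RB m n r d"
  unfolding RB_def by (rule imageI)

lemma RB_inj: "\<beta> \<in> RB m n r d \<Longrightarrow> \<gamma> \<in> RB m n r d \<Longrightarrow> clsa \<beta> = clsa \<gamma> \<Longrightarrow> \<beta> = \<gamma>"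
proof -
  assume a: "\<beta> \<in> RB m n r d" "\<gamma> \<in> RB m n r d" "clsa \<beta> = clsa \<gamma>"
  have "rep m n r d \<beta> = rep m n r d \<gamma>" by (rule rep_cong) (rule a(3))
  then show "\<beta> = \<gamma>" using rep_RB[OF a(1)] rep_RB[OF a(2)] by simp
qed

lemma finite_RB: "finite (RB m n r d)"
  using finite_subset[OF RB_sub finite_Md] .

lemma card_RB: "card (RB m n r d) = card (clsa ` Md m n r d)"
proof -
  have "inj_on clsa (RB m n r d)" by (rule inj_onI) (rule RB_inj)
  then have "card (RB m n r d) = card (clsa ` RB m n r d)" by (simp add: card_image)
  also have "clsa ` RB m n r d = clsa ` Md m n r d"
    unfolding RB_def image_image by (rule image_cong) (simp_all add: rep_props(2))
  finally show ?thesis .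
qed

definition fd :: "nat \<Rightarrow> nat \<Rightarrow> nat \<Rightarrow> nat \<Rightarrow> (var \<Rightarrow>\<^sub>0 nat) \<Rightarrow> 'k::field mpoly" where
  "fd m n r d \<alpha> = mnm \<alpha> - mnm (rep m n r d \<alpha>)"

lemma lookup_fd: "lkp (fd m n r d \<alpha> :: 'k::field mpoly) \<gamma> =
   (if \<alpha> = \<gamma> then 1 else 0) - (if rep m n r d \<alpha> = \<gamma> then 1 else 0)"
  by (simp add: fd_def lookup_minus lookup_mono)

lemma mm_msetp: "mm (msetp \<alpha>) = mnm \<alpha>"
  by (simp add: mm_def)

lemma fd_I: assumes "\<alpha> \<in> Md m n r d" shows "(fd m n r d \<alpha> :: 'k::field mpoly) \<in> Imnr m n r"
proof -
  let ?\<beta> = "rep m n r d \<alpha>"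
  have b: "?\<beta> \<in> Md m n r d" "clsa ?\<beta> = clsa \<alpha>" using rep_props[OF assms] by auto
  have "rel m n r TYPE('k) (msetp \<alpha>) (msetp ?\<beta>)"
    by (rule connect[where d=d]) (use assms b in \<open>auto simp: Md_def size_msetp set_mset_msetp clsa_def\<close>)
  then show ?thesis by (simp add: rel_def fd_def mm_msetp)
qed

lemma fd_homog: assumes "\<alpha> \<in> Md m n r d" shows "(fd m n r d \<alpha> :: 'k::field mpoly) \<in> homog m n r d"
  unfolding fd_def using rep_props(1)[OF assms] assms
  by (intro kvs.subspace_diff[OF subspace_homog] mono_homog)

lemma inj_fd: "inj_on (fd m n r d :: _ \<Rightarrow> 'k::field mpoly) (Md m n r d - RB m n r d)"
proof (rule inj_onI)
  fix \<alpha> \<beta> assume a: "\<alpha> \<in> Md m n r d - RB m n r d" and b: "\<beta> \<in> Md m n r d - RB m n r d"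
    and e: "(fd m n r d \<alpha> :: 'k mpoly) = fd m n r d \<beta>"
  have ra: "rep m n r d \<alpha> \<noteq> \<alpha>" using a rep_in_RB[of \<alpha> m n r d] by auto
  have rb: "rep m n r d \<beta> \<noteq> \<alpha>" using a b rep_in_RB[of \<beta> m n r d] by auto
  have "lkp (fd m n r d \<alpha> :: 'k mpoly) \<alpha> = lkp (fd m n r d \<beta> :: 'k mpoly) \<alpha>" using e by simp
  then show "\<alpha> = \<beta>" using ra rb by (simp add: lookup_fd split: if_splits)
qed

lemma wc_clsa: "wc c \<beta> = (if clsa \<beta> = c then 1 else 0)"
  by (simp add: wc_def clsa_def)

lemma span_D: "kvs.span (fd m n r d ` (Md m n r d - RB m n r d)) = (Imnr m n r \<inter> homog m n r d :: 'k::field mpoly set)"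
proof (rule kvs.span_subspace)
  let ?S = "Md m n r d - RB m n r d"
  show "fd m n r d ` ?S \<subseteq> (Imnr m n r \<inter> homog m n r d :: 'k mpoly set)" using fd_I fd_homog by blast
  show "Imnr m n r \<inter> homog m n r d \<subseteq> kvs.span (fd m n r d ` ?S :: 'k mpoly set)"
  proof
    fix p :: "'k mpoly" assume p: "p \<in> Imnr m n r \<inter> homog m n r d"
    define q where "q = p - (\<Sum>\<alpha>\<in>?S. kscale (lkp p \<alpha>) (fd m n r d \<alpha>))"
    have qI: "q \<in> Imnr m n r" unfolding q_def
      by (intro I_diff kvs.subspace_sum[OF subspace_I] kvs.subspace_scale[OF subspace_I] fd_I) (use p in auto)
    have lq: "lkp q \<gamma> = lkp p \<gamma> - (\<Sum>\<alpha>\<in>?S. lkp p \<alpha> * ((if \<alpha> = \<gamma> then 1 else 0) - (if rep m n r d \<alpha> = \<gamma> then 1 else 0)))" for \<gamma>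
      by (simp add: q_def lookup_minus lookup_sum lookup_fd)
    have q0: "lkp q \<gamma> = 0" if g: "\<gamma> \<notin> RB m n r d" for \<gamma>
    proof -
      have "(\<Sum>\<alpha>\<in>?S. lkp p \<alpha> * ((if \<alpha> = \<gamma> then 1 else 0) - (if rep m n r d \<alpha> = \<gamma> then 1 else 0)))
          = (\<Sum>\<alpha>\<in>?S. if \<alpha> = \<gamma> then lkp p \<alpha> else 0)"
      proof (rule sum.cong)
        fix \<alpha> assume "\<alpha> \<in> ?S"
        then have "rep m n r d \<alpha> \<noteq> \<gamma>" using g rep_in_RB[of \<alpha> m n r d] by auto
        then show "lkp p \<alpha> * ((if \<alpha> = \<gamma> then 1 else 0) - (if rep m n r d \<alpha> = \<gamma> then 1 else 0))
          = (if \<alpha> = \<gamma> then lkp p \<alpha> else 0)" by simp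
      qed simp
      also have "\<dots> = (if \<gamma> \<in> ?S then lkp p \<gamma> else 0)" using finite_Md[of m n r d] by simp
      also have "\<dots> = lkp p \<gamma>" using homog_keys[of p m n r d] p g by (auto simp: in_keys_iff)
      finally show ?thesis by (simp add: lq)
    qed
    have kq: "kys q \<subseteq> RB m n r d" using q0 by (auto simp: in_keys_iff)
    have q1: "lkp q \<gamma> = 0" if g: "\<gamma> \<in> RB m n r d" for \<gamma>
    proof -
      have "0 = Lw (wc (clsa \<gamma>)) q" using Lw_I[OF qI] by simp
      also have "\<dots> = (\<Sum>\<beta>\<in>RB m n r d. lkp q \<beta> * wc (clsa \<gamma>) \<beta>)" by (rule Lw_superset[OF finite_RB kq])
      also have "\<dots> = (\<Sum>\<beta>\<in>RB m n r d. if \<beta> = \<gamma> then lkp q \<beta> else 0)"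
      proof (rule sum.cong)
        fix \<beta> assume b: "\<beta> \<in> RB m n r d"
        have "clsa \<beta> = clsa \<gamma> \<longleftrightarrow> \<beta> = \<gamma>" using RB_inj[OF b g] by blast
        then show "lkp q \<beta> * wc (clsa \<gamma>) \<beta> = (if \<beta> = \<gamma> then lkp q \<beta> else 0)" by (simp add: wc_clsa)
      qed simp
      also have "\<dots> = lkp q \<gamma>" using g finite_RB[of m n r d] by simp
      finally show ?thesis by simp
    qed
    have "q = 0" by (rule poly_mapping_eqI) (metis q0 q1 lookup_zero)
    then have "p = (\<Sum>\<alpha>\<in>?S. kscale (lkp p \<alpha>) (fd m n r d \<alpha>))" unfolding q_def by simp
    also have "\<dots> \<in> kvs.span (fd m n r d ` ?S)" by (intro kvs.span_sum kvs.span_scale kvs.span_base) auto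
    finally show "p \<in> kvs.span (fd m n r d ` ?S)" .
  qed
  show "kvs.subspace (Imnr m n r \<inter> homog m n r d :: 'k mpoly set)"
    by (rule kvs.subspace_inter[OF subspace_I subspace_homog])
qed

lemma indep_D: "kvs.independent (fd m n r d ` (Md m n r d - RB m n r d) :: 'k::field mpoly set)"
proof (rule kvs.independent_if_scalars_zero)
  let ?S = "Md m n r d - RB m n r d"
  have fS: "finite ?S" using finite_Md by blast
  show "finite (fd m n r d ` ?S :: 'k mpoly set)" using fS by simp
  fix u :: "'k mpoly \<Rightarrow> 'k" and x :: "'k mpoly"
  assume s: "(\<Sum>x\<in>fd m n r d ` ?S. kscale (u x) x) = 0" and x: "x \<in> fd m n r d ` ?S"
  then obtain \<alpha>0 where a0: "\<alpha>0 \<in> ?S" "x = fd m n r d \<alpha>0" by blast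
  have "0 = lkp (\<Sum>x\<in>fd m n r d ` ?S. kscale (u x) x) \<alpha>0" using s by simp
  also have "\<dots> = (\<Sum>\<alpha>\<in>?S. u (fd m n r d \<alpha>) * lkp (fd m n r d \<alpha> :: 'k mpoly) \<alpha>0)"
    by (simp add: lookup_sum sum.reindex[OF inj_fd])
  also have "\<dots> = (\<Sum>\<alpha>\<in>?S. if \<alpha> = \<alpha>0 then u (fd m n r d \<alpha>) else 0)"
  proof (rule sum.cong)
    fix \<alpha> assume "\<alpha> \<in> ?S"
    then have "rep m n r d \<alpha> \<noteq> \<alpha>0" using a0 rep_in_RB[of \<alpha> m n r d] by auto
    then show "u (fd m n r d \<alpha>) * lkp (fd m n r d \<alpha> :: 'k mpoly) \<alpha>0 = (if \<alpha> = \<alpha>0 then u (fd m n r d \<alpha>) else 0)"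
      by (simp add: lookup_fd)
  qed simp
  also have "\<dots> = u x" using a0 fS by simp
  finally show "u x = 0" by simp
qed

lemma dim_I: "kvs.dim (Imnr m n r \<inter> homog m n r d :: 'k::field mpoly set) = card (Md m n r d - RB m n r d)"
proof -
  have "kvs.dim (Imnr m n r \<inter> homog m n r d :: 'k mpoly set) = card (fd m n r d ` (Md m n r d - RB m n r d) :: 'k mpoly set)"
    by (rule kvs.dim_eq_card) (simp_all add: span_D indep_D
        kvs.span_eq_iff[THEN iffD2, OF kvs.subspace_inter[OF subspace_I subspace_homog]])
  also have "\<dots> = card (Md m n r d - RB m n r d)" by (rule card_image[OF inj_fd])
  finally show ?thesis .
qed

lemma hilbert_fun_classes: "hilbert_fun m n r (K :: 'k::field itself) d = card (clsa ` Md m n r d)"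
proof -
  have "hilbert_fun m n r K d = card (Md m n r d) - card (Md m n r d - RB m n r d)"
    by (simp add: hilbert_fun_def kdim_eq dim_homog dim_I)
  also have "\<dots> = card (RB m n r d)"
    using card_Diff_subset[OF finite_RB RB_sub] card_mono[OF finite_Md RB_sub] by simp
  finally show ?thesis by (simp add: card_RB)
qed

lemma cls_image: "cls ` multisets_of_size (vars_set m n r) d =
  multisets_of_size {1..m} d \<times> multisets_of_size {1..n} d \<times> multisets_of_size {1..r} d"
proof
  show "cls ` multisets_of_size (vars_set m n r) d \<subseteq>
    multisets_of_size {1..m} d \<times> multisets_of_size {1..n} d \<times> multisets_of_size {1..r} d"
  proof
    fix t assume "t \<in> cls ` multisets_of_size (vars_set m n r) d"
    then obtain M where M: "set_mset M \<subseteq> vars_set m n r" "size M = d" "t = cls M"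
      by (auto simp: multisets_of_size_def)
    have "fst ` set_mset M \<subseteq> {1..m}" "(\<lambda>v. fst (snd v)) ` set_mset M \<subseteq> {1..n}"
      "(\<lambda>v. snd (snd v)) ` set_mset M \<subseteq> {1..r}"
    proof -
      have *: "fst v \<in> {1..m} \<and> fst (snd v) \<in> {1..n} \<and> snd (snd v) \<in> {1..r}" if "v \<in># M" for v
      proof -
        have "v \<in> {1..m} \<times> {1..n} \<times> {1..r}" using M(1) that unfolding vars_set_def by blast
        then show ?thesis by (cases v) auto
      qed
      show "fst ` set_mset M \<subseteq> {1..m}" "(\<lambda>v. fst (snd v)) ` set_mset M \<subseteq> {1..n}"
        "(\<lambda>v. snd (snd v)) ` set_mset M \<subseteq> {1..r}" using * by auto
    qed
    then show "t \<in> multisets_of_size {1..m} d \<times> multisets_of_size {1..n} d \<times> multisets_of_size {1..r} d"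
      using M by (simp add: cls_def multisets_of_size_def)
  qed
  show "multisets_of_size {1..m} d \<times> multisets_of_size {1..n} d \<times> multisets_of_size {1..r} d
     \<subseteq> cls ` multisets_of_size (vars_set m n r) d"
  proof
    fix t assume t: "t \<in> multisets_of_size {1..m} d \<times> multisets_of_size {1..n} d \<times> multisets_of_size {1..r} d"
    obtain I J L where tt: "t = (I, J, L)" by (cases t) auto
    define xs where "xs = sorted_list_of_multiset I"
    define ys where "ys = sorted_list_of_multiset J"
    define zs where "zs = sorted_list_of_multiset L"
    have mx: "mset xs = I" "mset ys = J" "mset zs = L" by (simp_all add: xs_def ys_def zs_def)
    have sz: "size I = d" "size J = d" "size L = d" "set_mset I \<subseteq> {1..m}" "set_mset J \<subseteq> {1..n}"
      "set_mset L \<subseteq> {1..r}" using t tt by (auto simp: multisets_of_size_def)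
    have lx: "length xs = d" "length ys = d" "length zs = d"
      using sz mx by (simp_all flip: size_mset)
    define M where "M = mset (zip xs (zip ys zs))"
    have z1: "map fst (zip xs (zip ys zs)) = xs" using lx by simp
    have z2: "map snd (zip xs (zip ys zs)) = zip ys zs" using lx by simp
    have z3: "map fst (zip ys zs) = ys" "map snd (zip ys zs) = zs" using lx by simp_all
    have "image_mset fst M = mset (map fst (zip xs (zip ys zs)))" by (simp add: M_def)
    then have "image_mset fst M = I" using z1 mx by simp
    moreover have "image_mset (\<lambda>v. fst (snd v)) M = mset (map fst (map snd (zip xs (zip ys zs))))"
      by (simp add: M_def comp_def)
    then have "image_mset (\<lambda>v. fst (snd v)) M = J" using z2 z3 mx by simp
    moreover have "image_mset (\<lambda>v. snd (snd v)) M = mset (map snd (map snd (zip xs (zip ys zs))))"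
      by (simp add: M_def comp_def)
    then have "image_mset (\<lambda>v. snd (snd v)) M = L" using z2 z3 mx by simp
    ultimately have c: "cls M = t" by (simp add: cls_def tt)
    have "set_mset M \<subseteq> vars_set m n r"
    proof
      fix v assume "v \<in># M"
      then have "v \<in> set (zip xs (zip ys zs))" by (simp add: M_def)
      moreover obtain x y z where v: "v = (x,y,z)" by (cases v) auto
      ultimately have "x \<in> set xs" "y \<in> set ys" "z \<in> set zs"
        by (auto dest: set_zip_leftD set_zip_rightD)
      then have "x \<in> set_mset I" "y \<in> set_mset J" "z \<in> set_mset L" using mx by auto
      then show "v \<in> vars_set m n r" using sz v unfolding vars_set_def by blast
    qed
    moreover have "size M = d" unfolding M_def using lx by simp
    ultimately show "t \<in> cls ` multisets_of_size (vars_set m n r) d"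
      using c by (auto simp: multisets_of_size_def)
  qed
qed

lemma card_classes: "card (clsa ` Md m n r d) = ((m + d - 1) choose d) * ((n + d - 1) choose d) * ((r + d - 1) choose d)"
proof -
  have "clsa ` Md m n r d = cls ` multisets_of_size (vars_set m n r) d"
    unfolding Md_eq image_image clsa_def by simp
  then show ?thesis by (simp add: cls_image card_cartesian_product card_multisets_of_size)
qed

lemma hilbert_fun_formula: "hilbert_fun m n r (K :: 'k::field itself) d =
   ((m + d - 1) choose d) * ((n + d - 1) choose d) * ((r + d - 1) choose d)"
  by (simp add: hilbert_fun_classes card_classes)

definition cuts :: "nat list \<Rightarrow> nat \<Rightarrow> nat list list set" where
  "cuts w d = {ps. length ps = Suc d \<and> concat ps = w \<and> (\<forall>p\<in>set ps. sorted p)}"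

definition cc :: "nat list \<Rightarrow> nat \<Rightarrow> nat" where
  "cc w d = card (cuts w d)"

lemma length_le_concat: "p \<in> set ps \<Longrightarrow> length p \<le> length (concat ps)"
  by (induction ps) auto

lemma finite_cuts: "finite (cuts w d)"
proof -
  let ?A = "{p. set p \<subseteq> set w \<and> length p \<le> length w}"
  have fA: "finite ?A" by (rule finite_lists_length_le) simp
  have "cuts w d \<subseteq> {ps. set ps \<subseteq> ?A \<and> length ps = Suc d}"
    unfolding cuts_def using length_le_concat by fastforce
  then show ?thesis using finite_lists_length_eq[OF fA] finite_subset by blast
qed

lemma cuts_Nil: "cuts [] d = {replicate (Suc d) []}"
proof -
  have "ps \<in> cuts [] d \<longleftrightarrow> ps = replicate (Suc d) []" for ps
  proof
    assume "ps \<in> cuts [] d"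
    then have "length ps = Suc d" "\<forall>p\<in>set ps. p = []" unfolding cuts_def by auto
    then show "ps = replicate (Suc d) []" by (metis replicate_length_same)
  qed (simp add: cuts_def)
  then show ?thesis by blast
qed

lemma cc_Nil: "cc [] d = 1"
  by (simp add: cc_def cuts_Nil)

lemma cuts_0: "cuts w 0 = (if sorted w then {[w]} else {})"
proof -
  have "ps \<in> cuts w 0 \<longleftrightarrow> sorted w \<and> ps = [w]" for ps
    unfolding cuts_def by (cases ps) auto
  then show ?thesis by auto
qed

lemma cc_0: "cc w 0 = (if sorted w then 1 else 0)"
  by (simp add: cc_def cuts_0)

lemma sorted_Cons_le: "sorted q \<Longrightarrow> (q = [] \<or> x \<le> hd q) \<Longrightarrow> sorted (x # q)"
  by (cases q) auto

lemma cuts_Cons_Suc: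
  "cuts (x # w) (Suc d) = Cons [] ` cuts (x # w) d \<union>
     (\<lambda>qs. (x # hd qs) # tl qs) ` {qs \<in> cuts w (Suc d). hd qs = [] \<or> x \<le> hd (hd qs)}"
  (is "?L = ?A \<union> ?B")
proof
  show "?L \<subseteq> ?A \<union> ?B"
  proof
    fix ps assume ps: "ps \<in> ?L"
    then obtain p1 rest where pr: "ps = p1 # rest" unfolding cuts_def by (cases ps) auto
    show "ps \<in> ?A \<union> ?B"
    proof (cases p1)
      case Nil
      then have "rest \<in> cuts (x # w) d" using ps pr unfolding cuts_def by auto
      then show ?thesis using pr Nil by blast
    next
      case (Cons x' p1')
      have "x' = x" "w = p1' @ concat rest" using ps pr Cons unfolding cuts_def by auto
      moreover have "sorted (x' # p1')" "\<forall>p\<in>set rest. sorted p" "length rest = Suc d"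
        using ps pr Cons unfolding cuts_def by auto
      ultimately have "p1' # rest \<in> {qs \<in> cuts w (Suc d). hd qs = [] \<or> x \<le> hd (hd qs)}"
        unfolding cuts_def by (cases p1') auto
      moreover have "ps = (\<lambda>qs. (x # hd qs) # tl qs) (p1' # rest)" using pr Cons \<open>x' = x\<close> by simp
      ultimately show ?thesis by blast
    qed
  qed
  show "?A \<union> ?B \<subseteq> ?L"
  proof
    fix ps assume "ps \<in> ?A \<union> ?B"
    then show "ps \<in> ?L"
    proof
      assume "ps \<in> ?A" then show ?thesis unfolding cuts_def by auto
    next
      assume "ps \<in> ?B"
      then obtain qs where qs: "qs \<in> cuts w (Suc d)" "hd qs = [] \<or> x \<le> hd (hd qs)"
        and ps: "ps = (x # hd qs) # tl qs" by blast
      obtain q1 rest where qr: "qs = q1 # rest" using qs(1) unfolding cuts_def by (cases qs) auto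
      have "sorted q1" using qs(1) qr unfolding cuts_def by auto
      then have "sorted (x # q1)" using qs(2) qr by (intro sorted_Cons_le) auto
      then show ?thesis using qs(1) qr ps unfolding cuts_def by auto
    qed
  qed
qed

lemma hd_concat': "q \<noteq> [] \<Longrightarrow> hd (concat (q # qs)) = hd q"
  by (cases q) auto

lemma cc_Cons_Suc:
  "cc (x # w) (Suc d) = cc (x # w) d + (if w = [] then 1 else if x \<le> hd w then cc w (Suc d) else cc w d)"
proof -
  let ?g = "\<lambda>qs. (x # hd qs) # tl qs"
  let ?B = "{qs \<in> cuts w (Suc d). hd qs = [] \<or> x \<le> hd (hd qs)}"
  have disj: "Cons [] ` cuts (x # w) d \<inter> ?g ` ?B = {}" by auto
  have injg: "inj_on ?g ?B"
  proof (rule inj_onI)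
    fix qs qs' assume a: "qs \<in> ?B" "qs' \<in> ?B" "?g qs = ?g qs'"
    then have "qs \<noteq> []" "qs' \<noteq> []" unfolding cuts_def by auto
    with a(3) show "qs = qs'" by (metis list.inject list.collapse)
  qed
  have c1: "card (Cons [] ` cuts (x # w) d) = cc (x # w) d"
    unfolding cc_def by (rule card_image) simp
  have c2: "card (?g ` ?B) = card ?B" by (rule card_image[OF injg])
  have cB: "card ?B = (if w = [] then 1 else if x \<le> hd w then cc w (Suc d) else cc w d)"
  proof (cases w)
    case Nil
    then have "?B = cuts w (Suc d)" by (auto simp: cuts_Nil)
    then show ?thesis using Nil by (simp add: cc_def cuts_Nil)
  next
    case (Cons y w')
    have hdq: "hd qs = [] \<or> hd (hd qs) = y" if qc: "qs \<in> cuts w (Suc d)" for qs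
    proof -
      obtain q1 rest where "qs = q1 # rest" using qc unfolding cuts_def by (cases qs) auto
      moreover have "concat qs = y # w'" using qc Cons unfolding cuts_def by auto
      ultimately show ?thesis by (cases q1) auto
    qed
    show ?thesis
    proof (cases "x \<le> y")
      case True
      then have "?B = cuts w (Suc d)" using hdq by auto
      then show ?thesis using Cons True by (simp add: cc_def)
    next
      case False
      then have "?B = {qs \<in> cuts w (Suc d). hd qs = []}" using hdq by auto
      also have "\<dots> = Cons [] ` cuts w d"
      proof
        show "{qs \<in> cuts w (Suc d). hd qs = []} \<subseteq> Cons [] ` cuts w d"
        proof
          fix qs assume q: "qs \<in> {qs \<in> cuts w (Suc d). hd qs = []}"
          then obtain rest where "qs = [] # rest" unfolding cuts_def by (cases qs) auto
          moreover have "rest \<in> cuts w d" using q calculation unfolding cuts_def by auto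
          ultimately show "qs \<in> Cons [] ` cuts w d" by blast
        qed
        show "Cons [] ` cuts w d \<subseteq> {qs \<in> cuts w (Suc d). hd qs = []}"
          unfolding cuts_def by auto
      qed
      finally have "card ?B = cc w d" unfolding cc_def by (simp add: card_image)
      then show ?thesis using Cons False by simp
    qed
  qed
  have "cc (x # w) (Suc d) = card (Cons [] ` cuts (x # w) d) + card (?g ` ?B)"
    unfolding cc_def cuts_Cons_Suc
    by (rule card_Un_disjoint) (use disj finite_cuts in auto)
  then show ?thesis using c1 c2 cB by simp
qed


definition F :: "nat list \<Rightarrow> int fps" where
  "F w = Abs_fps (\<lambda>d. int (cc w d))"

lemma F_nth[simp]: "F w $ k = int (cc w k)"
  by (simp add: F_def)

lemma des_Cons: "des (x # w) = des w + (if w \<noteq> [] \<and> hd w < x then 1 else 0)"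
proof -
  define S where "S = (\<lambda>\<sigma>::nat list. {k. Suc k < length \<sigma> \<and> \<sigma> ! k > \<sigma> ! Suc k})"
  have finS: "finite (S w)" unfolding S_def by (rule finite_subset[of _ "{..<length w}"]) auto
  have e: "S (x # w) = (if w \<noteq> [] \<and> hd w < x then insert 0 (Suc ` S w) else Suc ` S w)"
  proof (rule set_eqI)
    fix k show "k \<in> S (x # w) \<longleftrightarrow> k \<in> (if w \<noteq> [] \<and> hd w < x then insert 0 (Suc ` S w) else Suc ` S w)"
    proof (cases k)
      case 0
      then show ?thesis by (cases w) (auto simp: S_def)
    next
      case (Suc j)
      then show ?thesis by (auto simp: S_def)
    qed
  qed
  have c: "card (Suc ` S w) = card (S w)" by (rule card_image) simp
  have "des (x # w) = card (S (x # w))" by (simp add: des_def S_def)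
  also have "\<dots> = card (S w) + (if w \<noteq> [] \<and> hd w < x then 1 else 0)"
    using c finS by (auto simp: e card_insert_disjoint)
  also have "card (S w) = des w" by (simp add: des_def S_def)
  finally show ?thesis .
qed

lemma sorted_Cons_hd: "w \<noteq> [] \<Longrightarrow> x \<le> hd w \<Longrightarrow> sorted (x # w) \<longleftrightarrow> sorted w"
  using sorted_Cons_le[of w x] by auto

lemma sorted_Cons_hd_not: "w \<noteq> [] \<Longrightarrow> hd w < x \<Longrightarrow> \<not> sorted (x # w)"
  by (cases w) auto

lemma F_step: "F (x # w) * (1 - fps_X) = (if w \<noteq> [] \<and> hd w < x then fps_X * F w else F w)"
proof (rule fps_ext)
  fix k
  have e: "(F (x # w) * (1 - fps_X)) $ k = F (x # w) $ k - (if k = 0 then 0 else F (x # w) $ (k - 1))"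
    by (simp add: right_diff_distrib mult.commute[of _ fps_X])
  show "(F (x # w) * (1 - fps_X)) $ k = (if w \<noteq> [] \<and> hd w < x then fps_X * F w else F w) $ k"
  proof (cases k)
    case 0
    have c0: "cc (x # w) 0 = (if w \<noteq> [] \<and> hd w < x then 0 else cc w 0)"
    proof (cases "w = []")
      case True then show ?thesis by (simp add: cc_0)
    next
      case False
      show ?thesis
      proof (cases "hd w < x")
        case True
        then show ?thesis unfolding cc_0 by (subst if_not_P[OF sorted_Cons_hd_not[OF False True]]) (simp add: False)
      next
        case nl: False
        then show ?thesis unfolding cc_0 by (subst sorted_Cons_hd[OF False]) (simp_all add: False)
      qed
    qed
    show ?thesis unfolding e using 0 c0 by simp
  next
    case (Suc d)
    then show ?thesis unfolding e
      by (cases "w = []") (auto simp: cc_Cons_Suc cc_Nil)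
  qed
qed

lemma F_Nil: "F [] * (1 - fps_X) = 1"
proof (rule fps_ext)
  fix k
  show "(F [] * (1 - fps_X)) $ k = (1 :: int fps) $ k"
    by (cases k) (simp_all add: right_diff_distrib mult.commute[of _ fps_X] cc_Nil)
qed

lemma F_main: "F w * (1 - fps_X) ^ Suc (length w) = fps_X ^ des w"
proof (induction w)
  case Nil
  then show ?case by (simp add: F_Nil des_def)
next
  case (Cons x w)
  define \<delta> where "\<delta> = (if w \<noteq> [] \<and> hd w < x then 1 else 0 :: nat)"
  have step: "F (x # w) * (1 - fps_X) = fps_X ^ \<delta> * F w" by (simp add: F_step \<delta>_def)
  have p: "(1 - fps_X :: int fps) ^ Suc (length (x # w)) = (1 - fps_X) * (1 - fps_X) ^ Suc (length w)" by simp
  have "F (x # w) * (1 - fps_X) ^ Suc (length (x # w)) = (F (x # w) * (1 - fps_X)) * (1 - fps_X) ^ Suc (length w)"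
    by (simp only: p mult.assoc)
  also have "\<dots> = fps_X ^ \<delta> * (F w * (1 - fps_X) ^ Suc (length w))"
    by (simp only: step mult.assoc)
  also have "\<dots> = fps_X ^ des (x # w)"
    by (subst Cons.IH) (simp add: des_Cons power_add \<delta>_def)
  finally show ?case .
qed

definition blk :: "nat \<Rightarrow> nat \<Rightarrow> nat \<Rightarrow> nat list" where
  "blk x y z = replicate x 1 @ replicate y 2 @ replicate z 3"

lemma count_rep: "count_list (replicate n x) y = (if x = y then n else 0)"
  by (induction n) auto

lemma blk_count: "count_list (blk x y z) 1 = x" "count_list (blk x y z) 2 = y" "count_list (blk x y z) 3 = z"
  by (simp_all add: blk_def count_rep)

lemma blk_sorted: "sorted (blk x y z)"
  by (auto simp: blk_def sorted_append)

lemma blk_set: "set (blk x y z) \<subseteq> {1,2,3}"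
  by (auto simp: blk_def)

lemma sorted_blk: "sorted p \<Longrightarrow> set p \<subseteq> {1,2,3} \<Longrightarrow>
   p = blk (count_list p 1) (count_list p 2) (count_list p 3)"
proof (induction p)
  case Nil
  then show ?case by (simp add: blk_def)
next
  case (Cons x p)
  have sp: "sorted p" "\<forall>y\<in>set p. x \<le> y" "set p \<subseteq> {1,2,3}" "x \<in> {1,2,3}" using Cons.prems by auto
  have IH: "p = blk (count_list p 1) (count_list p 2) (count_list p 3)" using Cons.IH sp by blast
  consider "x = 1" | "x = 2" | "x = 3" using sp(4) by blast
  then show ?case
  proof cases
    case 1
    then show ?thesis using IH by (simp add: blk_def)
  next
    case 2
    then have "1 \<notin> set p" using sp(2) by fastforce
    then have "count_list p 1 = 0" by simp
    then show ?thesis using IH 2 by (simp add: blk_def)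
  next
    case 3
    then have "1 \<notin> set p" "2 \<notin> set p" using sp(2) by fastforce+
    then have "count_list p 1 = 0" "count_list p 2 = 0" by simp_all
    then show ?thesis using IH 3 by (simp add: blk_def)
  qed
qed

definition Wd :: "nat \<Rightarrow> nat \<Rightarrow> nat \<Rightarrow> nat list set" where
  "Wd a b c = {\<sigma>. set \<sigma> \<subseteq> {1,2,3} \<and> count_list \<sigma> 1 = a \<and> count_list \<sigma> 2 = b \<and> count_list \<sigma> 3 = c}"

lemma Wd_length: "\<sigma> \<in> Wd a b c \<Longrightarrow> length \<sigma> = a + b + c"
proof -
  assume s: "\<sigma> \<in> Wd a b c"
  have "length \<sigma> = sum (count_list \<sigma>) {1,2,3}"
    by (rule sum_count_set[symmetric]) (use s in \<open>auto simp: Wd_def\<close>)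
  also have "\<dots> = a + b + c" using s by (simp add: Wd_def)
  finally show ?thesis .
qed

lemma finite_Wd: "finite (Wd a b c)"
proof -
  have "Wd a b c \<subseteq> {\<sigma>. set \<sigma> \<subseteq> {1,2,3} \<and> length \<sigma> = a + b + c}"
    using Wd_length by (auto simp: Wd_def)
  then show ?thesis by (rule finite_subset) (rule finite_lists_length_eq, simp)
qed

definition SS :: "nat \<Rightarrow> nat \<Rightarrow> nat \<Rightarrow> nat \<Rightarrow> nat list list set" where
  "SS a b c d = {ps. length ps = Suc d \<and> (\<forall>p\<in>set ps. sorted p) \<and> concat ps \<in> Wd a b c}"

lemma SS_UN: "SS a b c d = (\<Union>w\<in>Wd a b c. cuts w d)"
  by (auto simp: SS_def cuts_def)

lemma card_SS_cc: "card (SS a b c d) = (\<Sum>w\<in>Wd a b c. cc w d)"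
  unfolding SS_UN cc_def
proof (rule card_UN_disjoint[OF finite_Wd])
  show "\<forall>w\<in>Wd a b c. finite (cuts w d)" using finite_cuts by blast
  show "\<forall>w\<in>Wd a b c. \<forall>w'\<in>Wd a b c. w \<noteq> w' \<longrightarrow> cuts w d \<inter> cuts w' d = {}"
    by (auto simp: cuts_def)
qed

definition P3 :: "nat \<Rightarrow> nat \<Rightarrow> nat \<Rightarrow> nat \<Rightarrow> nat" where
  "P3 a b c d = ((a + d) choose a) * ((b + d) choose b) * ((c + d) choose c)"

lemma blk_Wd: "blk x y z \<in> Wd x y z"
  using blk_count[of x y z] blk_set[of x y z] unfolding Wd_def by blast

lemma SS_0: "SS a b c 0 = {[blk a b c]}"
proof -
  have "ps \<in> SS a b c 0 \<longleftrightarrow> ps = [blk a b c]" for ps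
  proof
    assume "ps \<in> SS a b c 0"
    then obtain p where p: "ps = [p]" "sorted p" "p \<in> Wd a b c" unfolding SS_def by (cases ps) auto
    then have "p = blk a b c" using sorted_blk[of p] by (auto simp: Wd_def)
    then show "ps = [blk a b c]" using p by simp
  next
    assume "ps = [blk a b c]"
    then show "ps \<in> SS a b c 0" by (simp add: SS_def blk_sorted blk_Wd)
  qed
  then show ?thesis by blast
qed

lemma finite_SS: "finite (SS a b c d)"
  unfolding SS_UN using finite_Wd finite_cuts by blast

definition hb :: "(nat \<times> nat \<times> nat) \<times> nat list list \<Rightarrow> nat list list" where
  "hb tp = blk (fst (fst tp)) (fst (snd (fst tp))) (snd (snd (fst tp))) # snd tp"

lemma blk_inj: "blk x y z = blk x' y' z' \<Longrightarrow> x = x' \<and> y = y' \<and> z = z'"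
  by (metis blk_count)

lemma SS_Suc: "SS a b c (Suc d) = hb ` (SIGMA t:{..a} \<times> {..b} \<times> {..c}. SS (a - fst t) (b - fst (snd t)) (c - snd (snd t)) d)"
  (is "?L = hb ` ?Sig")
proof
  show "?L \<subseteq> hb ` ?Sig"
  proof
    fix ps assume ps: "ps \<in> ?L"
    then obtain p rest where pr: "ps = p # rest" unfolding SS_def by (cases ps) auto
    have sp: "sorted p" "\<forall>q\<in>set rest. sorted q" "length rest = Suc d" using ps pr by (auto simp: SS_def)
    have cw: "p @ concat rest \<in> Wd a b c" using ps pr by (simp add: SS_def)
    then have setp: "set p \<subseteq> {1,2,3}" and setr: "set (concat rest) \<subseteq> {1,2,3}" by (auto simp: Wd_def)
    define x where "x = count_list p 1"
    define y where "y = count_list p 2"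
    define z where "z = count_list p 3"
    have pb: "p = blk x y z" unfolding x_def y_def z_def by (rule sorted_blk[OF sp(1) setp])
    have cnt: "x + count_list (concat rest) 1 = a" "y + count_list (concat rest) 2 = b"
      "z + count_list (concat rest) 3 = c" using cw by (auto simp: Wd_def x_def y_def z_def)
    have "((x,y,z), rest) \<in> ?Sig" using cnt sp setr by (auto simp: SS_def Wd_def)
    moreover have "ps = hb ((x,y,z), rest)" by (simp add: hb_def pr pb)
    ultimately show "ps \<in> hb ` ?Sig" by blast
  qed
  show "hb ` ?Sig \<subseteq> ?L"
  proof
    fix ps assume "ps \<in> hb ` ?Sig"
    then obtain x y z rest where t: "x \<le> a" "y \<le> b" "z \<le> c" "rest \<in> SS (a - x) (b - y) (c - z) d"
      and ps: "ps = blk x y z # rest" by (auto simp: hb_def)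
    show "ps \<in> ?L" using t blk_sorted[of x y z] blk_set[of x y z] blk_count[of x y z]
      by (auto simp: ps SS_def Wd_def)
  qed
qed

lemma inj_hb: "inj hb"
proof (rule injI)
  fix u v assume "hb u = hb v"
  then show "u = v" unfolding hb_def using blk_inj by (metis list.inject prod.collapse)
qed

lemma sum3: "finite A \<Longrightarrow> finite B \<Longrightarrow> finite C \<Longrightarrow>
  (\<Sum>t\<in>A \<times> B \<times> C. f (fst t) * g (fst (snd t)) * h (snd (snd t))) = sum f A * sum g B * (sum h C :: nat)"
proof -
  assume fin: "finite A" "finite B" "finite C"
  have "(\<Sum>t\<in>A \<times> B \<times> C. f (fst t) * g (fst (snd t)) * h (snd (snd t)))
      = (\<Sum>x\<in>A. \<Sum>u\<in>B \<times> C. f x * (g (fst u) * h (snd u)))"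
    by (simp add: sum.cartesian_product split_def mult.assoc)
  also have "\<dots> = (\<Sum>x\<in>A. f x * (\<Sum>u\<in>B \<times> C. g (fst u) * h (snd u)))"
    by (simp add: sum_distrib_left)
  also have "(\<Sum>u\<in>B \<times> C. g (fst u) * h (snd u)) = sum g B * sum h C"
    by (simp add: sum_product sum.cartesian_product split_def)
  finally show ?thesis by (simp add: sum_distrib_right mult.assoc)
qed

lemma hockey: "(\<Sum>x\<le>a. (a + d - x) choose (a - x)) = Suc (a + d) choose a"
proof -
  have "(\<Sum>x\<le>a. (a + d - x) choose (a - x)) = (\<Sum>x<Suc a. (\<lambda>k. (k + d) choose k) (Suc a - Suc x))"
    by (rule sum.cong) (auto simp: lessThan_Suc_atMost)
  also have "\<dots> = (\<Sum>k<Suc a. (k + d) choose k)" by (rule sum.nat_diff_reindex)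
  also have "\<dots> = (\<Sum>k\<le>a. (d + k) choose k)" by (simp add: lessThan_Suc_atMost add.commute)
  also have "\<dots> = Suc (d + a) choose a" by (rule sum_choose_lower)
  finally show ?thesis by (simp add: add.commute)
qed

lemma card_SS: "card (SS a b c d) = P3 a b c d"
proof (induction d arbitrary: a b c)
  case 0
  then show ?case by (simp add: SS_0 P3_def)
next
  case (Suc d)
  let ?T = "{..a} \<times> {..b} \<times> {..c}"
  have "card (SS a b c (Suc d)) = card (SIGMA t:?T. SS (a - fst t) (b - fst (snd t)) (c - snd (snd t)) d)"
    unfolding SS_Suc by (rule card_image) (rule inj_on_subset[OF inj_hb subset_UNIV])
  also have "\<dots> = (\<Sum>t\<in>?T. card (SS (a - fst t) (b - fst (snd t)) (c - snd (snd t)) d))"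
    by (rule card_SigmaI) (simp_all add: finite_SS)
  also have "\<dots> = (\<Sum>t\<in>?T. ((a - fst t + d) choose (a - fst t)) * ((b - fst (snd t) + d) choose (b - fst (snd t)))
        * ((c - snd (snd t) + d) choose (c - snd (snd t))))"
    by (simp add: Suc.IH P3_def)
  also have "\<dots> = (\<Sum>x\<le>a. (a - x + d) choose (a - x)) * (\<Sum>y\<le>b. (b - y + d) choose (b - y))
        * (\<Sum>z\<le>c. (c - z + d) choose (c - z))"
    by (rule sum3) simp_all
  also have "\<dots> = P3 a b c (Suc d)" by (simp add: hockey P3_def)
  finally show ?case .
qed


lemma sum_X_des: "(\<Sum>w\<in>W. fps_X ^ des w :: int fps) = Abs_fps (\<lambda>k. int (card {w \<in> W. des w = k}))"
  if "finite W"
proof (rule fps_ext)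
  fix k
  have "(\<Sum>w\<in>W. fps_X ^ des w :: int fps) $ k = (\<Sum>w\<in>W. if k = des w then 1 else 0)"
    by (simp add: fps_sum_nth)
  also have "\<dots> = int (card {w \<in> W. des w = k})"
    using that by (simp add: sum.If_cases eq_commute[of k] Collect_conj_eq)
  finally show "(\<Sum>w\<in>W. fps_X ^ des w :: int fps) $ k = Abs_fps (\<lambda>k. int (card {w \<in> W. des w = k})) $ k"
    by simp
qed

lemma main_A: "Abs_fps (\<lambda>d. int (P3 a b c d)) * (1 - fps_X) ^ Suc (a + b + c)
   = Abs_fps (\<lambda>k. int (card {w \<in> Wd a b c. des w = k}))"
proof -
  have e: "Abs_fps (\<lambda>d. int (P3 a b c d)) = (\<Sum>w\<in>Wd a b c. F w)"
  proof (rule fps_ext)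
    fix d
    have "(\<Sum>w\<in>Wd a b c. F w) $ d = int (\<Sum>w\<in>Wd a b c. cc w d)" by (simp add: fps_sum_nth)
    also have "\<dots> = int (P3 a b c d)" by (simp add: card_SS_cc[symmetric] card_SS)
    finally show "Abs_fps (\<lambda>d. int (P3 a b c d)) $ d = (\<Sum>w\<in>Wd a b c. F w) $ d" by simp
  qed
  have "Abs_fps (\<lambda>d. int (P3 a b c d)) * (1 - fps_X) ^ Suc (a + b + c)
      = (\<Sum>w\<in>Wd a b c. F w * (1 - fps_X) ^ Suc (length w))"
    unfolding e sum_distrib_right by (rule sum.cong) (simp_all add: Wd_length)
  also have "\<dots> = (\<Sum>w\<in>Wd a b c. fps_X ^ des w)" by (rule sum.cong[OF refl]) (rule F_main)
  also have "\<dots> = Abs_fps (\<lambda>k. int (card {w \<in> Wd a b c. des w = k}))" by (rule sum_X_des[OF finite_Wd])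
  finally show ?thesis .
qed

theorem corollary4p7:
  fixes K :: "'k::field itself" and m n r :: nat
  assumes "m \<ge> 1" and "n \<ge> 1" and "r \<ge> 1"
  shows "\<exists>D::nat. hilbert_series m n r K * (1 - fps_X) ^ D = descent_poly m n r"
proof -
  have ch: "(x + d - Suc 0) choose d = (x + d - Suc 0) choose (x - Suc 0)" if "x \<ge> 1" for x d :: nat
  proof -
    have "(x + d - Suc 0) choose d = (x + d - Suc 0) choose (x + d - Suc 0 - d)"
      by (rule binomial_symmetric) (use that in simp)
    moreover have "x + d - Suc 0 - d = x - Suc 0" using that by simp
    ultimately show ?thesis by simp
  qed
  have hs: "hilbert_series m n r K = Abs_fps (\<lambda>d. int (P3 (m - 1) (n - 1) (r - 1) d))"
    unfolding hilbert_series_def hilbert_fun_formula P3_def using assms by (simp add: ch)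
  have dp: "descent_poly m n r = Abs_fps (\<lambda>k. int (card {w \<in> Wd (m - 1) (n - 1) (r - 1). des w = k}))"
    by (simp add: descent_poly_def words_SM_def Wd_def)
  show ?thesis
    by (rule exI[of _ "Suc ((m - 1) + (n - 1) + (r - 1))"]) (simp only: hs dp main_A)
qed

end
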